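(* For all $\lambda\in[0,1]$ and all $i\neq j$, $k\in\{-1,1\}$, the functions $R_{i,j}^{(k)}$ satisfy $$R_{i,j}^{(k)}(\lambda)=\lambda\Big[p_{i,j}^{(k)}+\sum_{m\neq i,j}p_{i,m}^{(k)}R_{m,j}^{(k)}(\lambda)+\sum_{m\neq i}p_{i,m}^{(-k)}R_{m,i}^{(-k)}(\lambda)R_{i,j}^{(k)}(\lambda)\Big].$$
   Context: Fix an integer $N\ge 3$. Let $\mathcal G_N$ be the groupoid with object set $\{1,\dots,N\}$ generated by arrows $A_{i,j}^{(k)}$, $i\neq j\in\{1,\dots,N\}$, $k\in\{-1,1\}$, with source $i$ and target $j$, subject to the relations $A_{i,j}^{(k)}A_{j,\ell}^{(k)}=A_{i,\ell}^{(k)}$ for all $i,j,\ell$, $k$, with the convention $A_{i,i}^{(k)}:=e_i$ (unit at object $i$). Let $\mathcal A$ be its arrow set. Let $\{W_n\}_{n\ge0}$ be the Markov chain on $\mathcal A$ with $P(W_{n+1}=y\mid W_n=x)=p_{i,j}^{(k)}$ if $x^{-1}y=A_{i,j}^{(k)}$ with $i\ne j$ and $0$ otherwise, where $p_{i,j}^{(k)}\in(0,1)$ and $\sum_{j\ne i}\sum_{k=\pm1}p_{i,j}^{(k)}=1$ for each $i$; $P_x,E_x$ denote law and expectation with $W_0=x$. For $x\in\mathcal A$ let $T(0,x)=\inf\{n\ge0:W_n=W_0x\}$ (possibly $\infty$), and define $R_{i,j}^{(k)}(\lambda)=E_{e_i}[\lambda^{T(0,A_{i,j}^{(k)})}]=\sum_{n\ge0}P_{e_i}(T(0,A_{i,j}^{(k)})=n)\lambda^n$.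 *)

theory Defs
  imports Complex_Main
begin

text \<open>
  Arrows of the groupoid G_N are represented by words in the generators.
  A generator A_{a,b}^{(k)} (a \<noteq> b) applied after an arrow ending at a is
  recorded as the step (b,k).  A word starting at object i is a list of
  steps; its target is the last vertex visited.  Since every generator
  A_{a,b}^{(k)} has inverse A_{b,a}^{(k)} (by the relations), every arrow
  of G_N is represented by such a word, and two words represent the same
  arrow iff they are related by the congruence generated by the defining
  relations A_{a,b}^{(k)} A_{b,c}^{(k)} = A_{a,c}^{(k)} (with A_{a,a}^{(k)} = e_a).
\<close>

type_synonym step = "nat \<times> int"

definition last_vertex :: "nat \<Rightarrow> step list \<Rightarrow> nat" where
  "last_vertex i s = (if s = [] then i else fst (last s))"

definition valid_path :: "nat \<Rightarrow> nat \<Rightarrow> step list \<Rightarrow> bool" where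
  "valid_path N i s \<longleftrightarrow> i \<in> {1..N} \<and>
     (\<forall>t < length s. fst (s ! t) \<in> {1..N} \<and> snd (s ! t) \<in> {-1, 1} \<and>
        fst (s ! t) \<noteq> last_vertex i (take t s))"

text \<open>One application (inside a word) of a defining relation
  A_{a,b}^{(k)} A_{b,c}^{(k)} = A_{a,c}^{(k)}, where A_{a,a}^{(k)} = e_a.\<close>
definition grp_rel :: "nat \<Rightarrow> nat \<Rightarrow> step list \<Rightarrow> step list \<Rightarrow> bool" where
  "grp_rel N i u v \<longleftrightarrow> valid_path N i u \<and> valid_path N i v \<and>
     (\<exists>xs ys b c k. u = xs @ [(b, k), (c, k)] @ ys \<and>
        v = (if c = last_vertex i xs then xs @ ys else xs @ [(c, k)] @ ys))"

definition same_arrow :: "nat \<Rightarrow> nat \<Rightarrow> step list \<Rightarrow> step list \<Rightarrow> bool" where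
  "same_arrow N i = (\<lambda>x y. grp_rel N i x y \<or> grp_rel N i y x)\<^sup>*\<^sup>*"

definition path_prob :: "(nat \<Rightarrow> nat \<Rightarrow> int \<Rightarrow> real) \<Rightarrow> nat \<Rightarrow> step list \<Rightarrow> real" where
  "path_prob p i s = (\<Prod>t < length s. p (last_vertex i (take t s)) (fst (s ! t)) (snd (s ! t)))"

text \<open>P_{e_i}(T(0, A_{i,j}^{(k)}) = n): W_m = e_i \<cdot> (first m increments), and
  W_0 A_{i,j}^{(k)} = A_{i,j}^{(k)} is the word [(j,k)].\<close>
definition hit_prob :: "(nat \<Rightarrow> nat \<Rightarrow> int \<Rightarrow> real) \<Rightarrow> nat \<Rightarrow> nat \<Rightarrow> nat \<Rightarrow> int \<Rightarrow> nat \<Rightarrow> real" where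
  "hit_prob p N i j k n =
     (\<Sum>s \<in> {s. length s = n \<and> valid_path N i s \<and> same_arrow N i s [(j, k)] \<and>
               (\<forall>m < n. \<not> same_arrow N i (take m s) [(j, k)])}. path_prob p i s)"

definition R :: "(nat \<Rightarrow> nat \<Rightarrow> int \<Rightarrow> real) \<Rightarrow> nat \<Rightarrow> nat \<Rightarrow> nat \<Rightarrow> int \<Rightarrow> real \<Rightarrow> real" where
  "R p N i j k x = (\<Sum>n. hit_prob p N i j k n * x ^ n)"

end

theory Submission
  imports Defs
begin

lemma lv_Nil[simp]: "last_vertex i [] = i" by (simp add: last_vertex_def)
lemma lv_snoc[simp]: "last_vertex i (xs@[x]) = fst x" by (simp add: last_vertex_def)
lemma lv_Cons[simp]: "last_vertex i (x#xs) = last_vertex (fst x) xs" by (simp add: last_vertex_def)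
lemma lv_append: "last_vertex i (xs@ys) = last_vertex (last_vertex i xs) ys"
  by (simp add: last_vertex_def)

lemma valid_Nil[simp]: "valid_path N i [] \<longleftrightarrow> i \<in> {1..N}" by (simp add: valid_path_def)

lemma valid_Cons: "valid_path N i (x#xs) \<longleftrightarrow> i \<in> {1..N} \<and> fst x \<in> {1..N} \<and> snd x \<in> {-1,1}
   \<and> fst x \<noteq> i \<and> valid_path N (fst x) xs"
proof -
  have "(\<forall>t < length (x#xs). P t) \<longleftrightarrow> P 0 \<and> (\<forall>t<length xs. P (Suc t))" for P
    by (auto simp: less_Suc_eq_0_disj)
  then show ?thesis unfolding valid_path_def by auto
qed

lemma valid_append: "valid_path N i (xs@ys) \<longleftrightarrow> valid_path N i xs \<and> valid_path N (last_vertex i xs) ys"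
proof (induction xs arbitrary: i)
  case Nil
  then show ?case by (auto simp: valid_path_def)
next
  case (Cons a xs)
  then show ?case by (auto simp: valid_Cons)
qed

lemma lv_range: "valid_path N i xs \<Longrightarrow> last_vertex i xs \<in> {1..N}"
  unfolding valid_path_def last_vertex_def
  by (metis diff_less last_conv_nth length_greater_0_conv less_numeral_extra(1))

lemma valid_snoc: "valid_path N i (xs@[x]) \<longleftrightarrow> valid_path N i xs \<and> fst x \<in> {1..N} \<and> snd x \<in> {-1,1} \<and> fst x \<noteq> last_vertex i xs"
  using lv_range[of N i xs] by (auto simp: valid_append valid_Cons)

lemma valid_take: "valid_path N i s \<Longrightarrow> valid_path N i (take m s)"
  by (metis append_take_drop_id valid_append)

lemma valid_start: "valid_path N i s \<Longrightarrow> i \<in> {1..N}"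
  by (simp add: valid_path_def)

lemma pp_Nil[simp]: "path_prob p i [] = 1" by (simp add: path_prob_def)
lemma pp_Cons[simp]: "path_prob p i (x#xs) = p i (fst x) (snd x) * path_prob p (fst x) xs"
  unfolding path_prob_def by (simp del: prod.lessThan_Suc add: prod.lessThan_Suc_shift)
lemma pp_append: "path_prob p i (xs@ys) = path_prob p i xs * path_prob p (last_vertex i xs) ys"
  by (induction xs arbitrary: i) auto


definition nstep :: "nat \<Rightarrow> step list \<Rightarrow> step \<Rightarrow> step list" where
  "nstep i w x = (if w \<noteq> [] \<and> snd (last w) = snd x then
      (if fst x = last_vertex i (butlast w) then butlast w else butlast w @ [x]) else w @ [x])"

definition nf :: "nat \<Rightarrow> step list \<Rightarrow> step list" where
  "nf i s = foldl (nstep i) [] s"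

lemma nf_Nil[simp]: "nf i [] = []" by (simp add: nf_def)
lemma nf_snoc: "nf i (s@[x]) = nstep i (nf i s) x" by (simp add: nf_def)
lemma nf_append: "nf i (u@v) = foldl (nstep i) (nf i u) v" by (simp add: nf_def)
lemma nf_append_cong: "nf i u = nf i u' \<Longrightarrow> nf i (u@v) = nf i (u'@v)" by (simp add: nf_append)

definition alt :: "step list \<Rightarrow> bool" where
  "alt w \<longleftrightarrow> (\<forall>t. Suc t < length w \<longrightarrow> snd (w!t) \<noteq> snd (w!Suc t))"

lemma alt_Nil[simp]: "alt []" by (simp add: alt_def)

lemma alt_aux: "(\<forall>t<length w. snd (w!t) \<noteq> snd (if Suc t < length w then w!Suc t else (x::'a\<times>'b))) \<longleftrightarrow>
   (\<forall>t. Suc t < length w \<longrightarrow> snd (w!t) \<noteq> snd (w!Suc t)) \<and> (w\<noteq>[] \<longrightarrow> snd (last w) \<noteq> snd x)"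
  (is "?L \<longleftrightarrow> ?R1 \<and> ?R2")
proof
  assume L: ?L
  have ?R1 using L by (metis Suc_lessD)
  moreover have ?R2
  proof
    assume "w \<noteq> []"
    then have "length w - 1 < length w" "\<not> Suc (length w - 1) < length w" by auto
    then show "snd (last w) \<noteq> snd x" using L \<open>w \<noteq> []\<close> by (metis last_conv_nth)
  qed
  ultimately show "?R1 \<and> ?R2" ..
next
  assume R: "?R1 \<and> ?R2"
  show ?L
  proof (intro allI impI)
    fix t assume t: "t < length w"
    show "snd (w!t) \<noteq> snd (if Suc t < length w then w!Suc t else x)"
    proof (cases "Suc t < length w")
      case True then show ?thesis using R by simp
    next
      case False
      then have "t = length w - 1" using t by simp
      then show ?thesis using R False t by (auto simp: last_conv_nth)
    qed
  qed
qed

lemma alt_snoc: "alt (w@[x]) \<longleftrightarrow> alt w \<and> (w \<noteq> [] \<longrightarrow> snd (last w) \<noteq> snd x)"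
proof -
  have "alt (w@[x]) \<longleftrightarrow> (\<forall>t<length w. snd (w!t) \<noteq> snd (if Suc t < length w then w!Suc t else x))"
    unfolding alt_def by (auto simp: nth_append)
  then show ?thesis using alt_aux[of w x] unfolding alt_def by simp
qed

lemma alt_butlast: "alt w \<Longrightarrow> alt (butlast w)"
  by (cases w rule: rev_cases) (auto simp: alt_snoc)

lemma nstep_inv:
  assumes "valid_path N i w" "alt w" "fst x \<in> {1..N}" "snd x \<in> {-1,1}" "fst x \<noteq> last_vertex i w"
  shows "valid_path N i (nstep i w x) \<and> alt (nstep i w x) \<and> last_vertex i (nstep i w x) = fst x"
proof (cases "w \<noteq> [] \<and> snd (last w) = snd x")
  case True
  then obtain w0 y where w: "w = w0 @ [y]" by (metis rev_exhaust)
  have "valid_path N i w0" "alt w0" "w0 \<noteq> [] \<longrightarrow> snd (last w0) \<noteq> snd y" "snd y = snd x"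
    using assms True by (auto simp: w valid_snoc alt_snoc)
  then show ?thesis using assms True by (auto simp: nstep_def w valid_snoc alt_snoc)
next
  case False
  then show ?thesis using assms by (auto simp: nstep_def valid_snoc alt_snoc)
qed

lemma nf_inv: "valid_path N i s \<Longrightarrow> valid_path N i (nf i s) \<and> alt (nf i s) \<and> last_vertex i (nf i s) = last_vertex i s"
proof (induction s rule: rev_induct)
  case Nil
  then show ?case by simp
next
  case (snoc x xs)
  then show ?case using nstep_inv[of N i "nf i xs" x] by (auto simp: nf_snoc valid_snoc)
qed

lemma nstep2:
  assumes "valid_path N i w" "alt w" "b \<noteq> last_vertex i w" "c \<noteq> b"
  shows "nstep i (nstep i w (b,k)) (c,k) = (if c = last_vertex i w then w else nstep i w (c,k))"
proof (cases "w \<noteq> [] \<and> snd (last w) = k")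
  case True
  then obtain w0 y where w: "w = w0 @ [y]" by (metis rev_exhaust)
  have "w0 \<noteq> [] \<longrightarrow> snd (last w0) \<noteq> snd y" "snd y = k" "fst y \<noteq> last_vertex i w0"
    using assms True by (auto simp: w valid_snoc alt_snoc)
  then show ?thesis using assms True by (cases y) (auto simp: nstep_def w)
next
  case False
  then show ?thesis using assms by (auto simp: nstep_def)
qed

lemma grp_rel_nf: "grp_rel N i u v \<Longrightarrow> nf i u = nf i v"
proof -
  assume g: "grp_rel N i u v"
  then obtain xs ys b c k where u: "u = xs @ [(b, k), (c, k)] @ ys" and
    v: "v = (if c = last_vertex i xs then xs @ ys else xs @ [(c, k)] @ ys)" and vu: "valid_path N i u"
    unfolding grp_rel_def by blast
  have vxs: "valid_path N i xs" and bne: "b \<noteq> last_vertex i xs" and cne: "c \<noteq> b"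
    using vu by (auto simp: u valid_append valid_Cons)
  have "nf i (xs @ [(b,k),(c,k)]) = (if c = last_vertex i xs then nf i xs else nf i (xs @ [(c,k)]))"
    using nstep2[of N i "nf i xs" b c k] nf_inv[OF vxs] bne cne
    by (simp add: nf_append)
  then show ?thesis unfolding u v
    by (smt (verit) append.assoc append_Cons append_Nil nf_append_cong)
qed

lemma grp_rel_lv: "grp_rel N i u v \<Longrightarrow> last_vertex i u = last_vertex i v"
  unfolding grp_rel_def
  by (auto simp: lv_append)

lemma grp_rel_valid: "grp_rel N i u v \<Longrightarrow> valid_path N i u \<and> valid_path N i v"
  unfolding grp_rel_def by blast

lemma sa_nf: "same_arrow N i u v \<Longrightarrow> nf i u = nf i v"
  unfolding same_arrow_def
  by (induction rule: rtranclp_induct) (auto dest: grp_rel_nf)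

lemma sa_props: "same_arrow N i u v \<Longrightarrow> valid_path N i u \<Longrightarrow> valid_path N i v \<and> last_vertex i u = last_vertex i v"
  unfolding same_arrow_def
  by (induction rule: rtranclp_induct) (auto dest: grp_rel_lv grp_rel_valid)

lemma sa_refl[simp]: "same_arrow N i u u" by (simp add: same_arrow_def)

lemma sa_trans: "same_arrow N i u v \<Longrightarrow> same_arrow N i v w \<Longrightarrow> same_arrow N i u w"
  unfolding same_arrow_def by (rule rtranclp_trans)

lemma sa_sym: "same_arrow N i u v \<Longrightarrow> same_arrow N i v u"
  unfolding same_arrow_def
proof (induction rule: rtranclp_induct)
  case base
  then show ?case by simp
next
  case (step y z)
  then show ?case by (metis (mono_tags, lifting) converse_rtranclp_into_rtranclp)
qed

lemma sa_step: "grp_rel N i u v \<Longrightarrow> same_arrow N i u v"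
  unfolding same_arrow_def by auto

lemma grp_rel_snoc: "grp_rel N i u v \<Longrightarrow> valid_path N i (u@[x]) \<Longrightarrow> grp_rel N i (u@[x]) (v@[x])"
proof -
  assume g: "grp_rel N i u v" and vx: "valid_path N i (u@[x])"
  have vv: "valid_path N i (v@[x])" using vx grp_rel_lv[OF g] grp_rel_valid[OF g] by (simp add: valid_snoc)
  from g obtain xs ys b c k where u: "u = xs @ [(b, k), (c, k)] @ ys" and
    v: "v = (if c = last_vertex i xs then xs @ ys else xs @ [(c, k)] @ ys)"
    unfolding grp_rel_def by blast
  have "u@[x] = xs @ [(b,k),(c,k)] @ (ys@[x]) \<and> v@[x] = (if c = last_vertex i xs then xs @ (ys@[x]) else xs @ [(c, k)] @ (ys@[x]))"
    using u v by auto
  then show ?thesis unfolding grp_rel_def using vx vv by blast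
qed

lemma sa_snoc: assumes "same_arrow N i u v" "valid_path N i (u@[x])" shows "same_arrow N i (u@[x]) (v@[x])"
  using assms(1)[unfolded same_arrow_def]
proof (induction rule: rtranclp_induct)
  case base
  then show ?case by simp
next
  case (step y z)
  have sy: "same_arrow N i u y" using step(1) by (simp add: same_arrow_def)
  have vy: "valid_path N i (y@[x])" using sa_props[OF sy] assms(2) by (auto simp: valid_snoc)
  have "same_arrow N i (y@[x]) (z@[x])"
    using step(2)
  proof
    assume "grp_rel N i y z" then show ?thesis using grp_rel_snoc vy sa_step by blast
  next
    assume g: "grp_rel N i z y"
    have "valid_path N i (z@[x])" using vy grp_rel_lv[OF g] grp_rel_valid[OF g] by (simp add: valid_snoc)
    then show ?thesis using grp_rel_snoc[OF g] sa_step sa_sym by blast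
  qed
  then show ?case using step(3) sa_trans by blast
qed

lemma sa_nf_self: "valid_path N i s \<Longrightarrow> same_arrow N i s (nf i s)"
proof (induction s rule: rev_induct)
  case Nil
  then show ?case by simp
next
  case (snoc x xs)
  have vxs: "valid_path N i xs" using snoc(2) by (simp add: valid_snoc)
  have I: "valid_path N i (nf i xs)" "alt (nf i xs)" "last_vertex i (nf i xs) = last_vertex i xs"
    using nf_inv[OF vxs] by auto
  have 1: "same_arrow N i (xs@[x]) (nf i xs @ [x])"
    using sa_snoc snoc by (simp add: valid_snoc)
  have "same_arrow N i (nf i xs @ [x]) (nstep i (nf i xs) x)"
  proof (cases "nf i xs \<noteq> [] \<and> snd (last (nf i xs)) = snd x")
    case True
    then obtain w0 y where w: "nf i xs = w0 @ [y]" by (metis rev_exhaust)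
    have sy: "snd y = snd x" using True w by simp
    have vw: "valid_path N i (w0 @ [y])" using I w by simp
    have v1: "valid_path N i (w0 @ [y, x])"
      using vw snoc(2) I(3) w valid_snoc[of N i "w0@[y]" x] by (simp add: valid_snoc)
    have v2: "valid_path N i (nstep i (nf i xs) x)"
      using nstep_inv[of N i "nf i xs" x] I snoc(2) by (simp add: valid_snoc)
    have e: "w0 @ [y, x] = w0 @ [(fst y, snd x), (fst x, snd x)] @ [] \<and>
       nstep i (nf i xs) x = (if fst x = last_vertex i w0 then w0 @ [] else w0 @ [(fst x, snd x)] @ [])"
      using sy w by (auto simp: nstep_def prod_eq_iff)
    have "grp_rel N i (w0 @ [y, x]) (nstep i (nf i xs) x)"
      unfolding grp_rel_def using v1 v2 e by blast
    then show ?thesis using w by (simp add: sa_step)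
  next
    case False
    then show ?thesis by (auto simp: nstep_def)
  qed
  then show ?case using 1 snoc.IH vxs by (simp add: nf_snoc sa_trans)
qed

lemma sa_iff_nf: "valid_path N i u \<Longrightarrow> valid_path N i v \<Longrightarrow> same_arrow N i u v \<longleftrightarrow> nf i u = nf i v"
  by (metis sa_nf sa_nf_self sa_sym sa_trans)


lemma grp_rel_Cons:
  assumes "grp_rel N b u v" "i \<in> {1..N}" "fst x = b" "b \<noteq> i" "snd x \<in> {-1,1}"
  shows "grp_rel N i (x#u) (x#v)"
proof -
  from assms(1) obtain xs ys c d k where u: "u = xs @ [(c, k), (d, k)] @ ys" and
    v: "v = (if d = last_vertex b xs then xs @ ys else xs @ [(d, k)] @ ys)" and
    vu: "valid_path N b u" and vv: "valid_path N b v"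
    unfolding grp_rel_def by blast
  have b: "b \<in> {1..N}" using vu valid_start by blast
  have "valid_path N i (x#u)" "valid_path N i (x#v)" using vu vv assms b by (auto simp: valid_Cons)
  moreover have "x#u = (x#xs) @ [(c, k), (d, k)] @ ys \<and> x#v = (if d = last_vertex i (x#xs) then (x#xs) @ ys else (x#xs) @ [(d, k)] @ ys)"
    using u v assms(3) by auto
  ultimately show ?thesis unfolding grp_rel_def by blast
qed

lemma sa_Cons:
  assumes "same_arrow N b u v" "i \<in> {1..N}" "fst x = b" "b \<noteq> i" "snd x \<in> {-1,1}"
  shows "same_arrow N i (x#u) (x#v)"
  using assms(1)[unfolded same_arrow_def]
proof (induction rule: rtranclp_induct)
  case base
  then show ?case by simp
next
  case (step y z)
  have "same_arrow N i (x#y) (x#z)"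
    using step(2) grp_rel_Cons[OF _ assms(2-5)] sa_step sa_sym by blast
  then show ?case using step(3) sa_trans by blast
qed

lemma grp_rel_cancel:
  assumes "valid_path N b u" "i \<in> {1..N}" "i \<noteq> b" "k \<in> {-1,1}"
  shows "grp_rel N b ((i,k)#(b,k)#u) u"
proof -
  have b: "b \<in> {1..N}" using assms(1) valid_start by blast
  have "valid_path N b ((i,k)#(b,k)#u)" using assms b by (auto simp: valid_Cons)
  moreover have "(i,k)#(b,k)#u = [] @ [(i,k),(b,k)] @ u \<and> u = (if b = last_vertex b [] then [] @ u else [] @ [(b,k)] @ u)"
    by simp
  ultimately show ?thesis unfolding grp_rel_def using assms(1) by blast
qed

lemma nf_cons_cancel:
  assumes "valid_path N i (x#u)" "valid_path N i (x#v)"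
  shows "nf i (x#u) = nf i (x#v) \<longleftrightarrow> nf (fst x) u = nf (fst x) v"
proof -
  obtain b k where x: "x = (b,k)" by fastforce
  have c: "i \<in> {1..N}" "b \<in> {1..N}" "k \<in> {-1,1}" "b \<noteq> i" "valid_path N b u" "valid_path N b v"
    using assms by (auto simp: valid_Cons x)
  have "same_arrow N i (x#u) (x#v) \<longleftrightarrow> same_arrow N b u v"
  proof
    assume s: "same_arrow N i (x#u) (x#v)"
    have "same_arrow N b ((i,k)#x#u) ((i,k)#x#v)"
      using sa_Cons[OF s c(2)] c by auto
    moreover have "same_arrow N b ((i,k)#x#u) u" "same_arrow N b ((i,k)#x#v) v"
      using grp_rel_cancel[of N b _ i k] c sa_step x by auto
    ultimately show "same_arrow N b u v" by (meson sa_sym sa_trans)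
  next
    assume "same_arrow N b u v"
    then show "same_arrow N i (x#u) (x#v)" using sa_Cons[of N b u v i x] c x by auto
  qed
  then show ?thesis using sa_iff_nf assms c x by auto
qed

lemma snoc_ex: "\<exists>a b r. l @ [y0::step] = (a,b)#r"
proof (cases l)
  case Nil then show ?thesis by (cases y0) auto
next
  case (Cons h t) then show ?thesis by (cases h) auto
qed

lemma nstep_shape: "nstep i w z = x#y#rest \<Longrightarrow> w = [x] \<or> (\<exists>y' r. w = x#y'#r)"
proof (cases w rule: rev_cases)
  case Nil
  then show "nstep i w z = x#y#rest \<Longrightarrow> ?thesis" by (simp add: nstep_def)
next
  case (snoc w0 y0)
  then show "nstep i w z = x#y#rest \<Longrightarrow> ?thesis"
    by (cases w0) (auto simp: nstep_def split: if_splits intro: snoc_ex)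
qed

lemma cut_lemma: "nf b t = x#y#rest \<Longrightarrow> \<exists>m\<le>length t. nf b (take m t) = [x]"
proof (induction t arbitrary: y rest rule: rev_induct)
  case Nil
  then show ?case by simp
next
  case (snoc z t)
  have "nstep b (nf b t) z = x#y#rest" using snoc(2) by (simp add: nf_snoc)
  then have "nf b t = [x] \<or> (\<exists>y' r. nf b t = x#y'#r)" by (rule nstep_shape)
  then show ?case
  proof
    assume "nf b t = [x]" then show ?thesis by (intro exI[of _ "length t"]) simp
  next
    assume "\<exists>y' r. nf b t = x#y'#r"
    then obtain m where "m \<le> length t" "nf b (take m t) = [x]" using snoc.IH by blast
    then show ?thesis by (intro exI[of _ m]) simp
  qed
qed


definition Hs :: "nat \<Rightarrow> nat \<Rightarrow> step list \<Rightarrow> nat \<Rightarrow> step list set" where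
  "Hs N i w n = {s. length s = n \<and> valid_path N i s \<and> nf i s = w \<and> (\<forall>m<n. nf i (take m s) \<noteq> w)}"

lemma valid_set: "valid_path N i s \<Longrightarrow> set s \<subseteq> {1..N} \<times> {-1,1}"
proof
  fix y assume v: "valid_path N i s" and "y \<in> set s"
  then obtain t where "t < length s" "s!t = y" by (metis in_set_conv_nth)
  then show "y \<in> {1..N} \<times> {-1,1}" using v unfolding valid_path_def by (auto simp: mem_Times_iff)
qed

lemma Hs_finite: "finite (Hs N i w n)"
proof (rule finite_subset)
  show "Hs N i w n \<subseteq> {xs. set xs \<subseteq> {1..N} \<times> {-1,1} \<and> length xs = n}"
    unfolding Hs_def using valid_set by blast
  show "finite {xs. set xs \<subseteq> {1..N} \<times> ({-1,1}::int set) \<and> length xs = n}"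
    by (rule finite_lists_length_eq) simp
qed

lemma sum_first:
  assumes "finite S" "finite A" "\<forall>s\<in>S. s \<noteq> [] \<and> hd s \<in> A"
  shows "sum f S = (\<Sum>x\<in>A. sum (\<lambda>t. f (x#t)) {t. x#t \<in> S})"
proof -
  have "sum f S = (\<Sum>x\<in>A. sum f {s. s \<in> S \<and> hd s = x})"
  proof -
    have "hd ` S \<subseteq> A" using assms(3) by auto
    then show ?thesis using sum.group[OF assms(1,2), of hd f] by simp
  qed
  also have "\<dots> = (\<Sum>x\<in>A. sum (\<lambda>t. f (x#t)) {t. x#t \<in> S})"
  proof (rule sum.cong[OF refl])
    fix x assume "x \<in> A"
    have "{s. s \<in> S \<and> hd s = x} = Cons x ` {t. x#t \<in> S}"
    proof (intro set_eqI iffI)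
      fix s assume "s \<in> {s. s \<in> S \<and> hd s = x}"
      then have "s \<in> S" "s = x # tl s" using assms(3) by (auto simp: list.collapse)
      then show "s \<in> Cons x ` {t. x#t \<in> S}" by (metis (mono_tags, lifting) image_eqI mem_Collect_eq)
    qed auto
    then show "sum f {s. s \<in> S \<and> hd s = x} = sum (\<lambda>t. f (x#t)) {t. x#t \<in> S}"
      by (simp add: sum.reindex)
  qed
  finally show ?thesis .
qed

lemma nf_single[simp]: "nf i [a] = [a]" by (simp add: nf_def nstep_def)
lemma nf_two: "nf i [a, b] = (if snd a = snd b then (if fst b = i then [] else [b]) else [a, b])"
  by (simp add: nf_def nstep_def)

lemma Hs_first:
  assumes vx: "valid_path N i (x#v)" and W: "nf i (x#v) = W" "W \<noteq> []"
  shows "{t. x#t \<in> Hs N i W (Suc n)} = Hs N (fst x) (nf (fst x) v) n"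
proof -
  have vstep: "valid_path N i (x#u) \<longleftrightarrow> valid_path N (fst x) u" for u
    using vx by (simp add: valid_Cons)
  have key: "valid_path N (fst x) u \<Longrightarrow> (nf i (x#u) = W \<longleftrightarrow> nf (fst x) u = nf (fst x) v)" for u
    using nf_cons_cancel[of N i x u v] vx vstep W by simp
  show ?thesis
  proof (intro set_eqI iffI)
    fix t assume "t \<in> {t. x#t \<in> Hs N i W (Suc n)}"
    then have h: "length t = n" "valid_path N (fst x) t" "nf i (x#t) = W" "\<forall>m<Suc n. nf i (take m (x#t)) \<noteq> W"
      unfolding Hs_def by (auto simp: vstep)
    have "\<forall>m<n. nf (fst x) (take m t) \<noteq> nf (fst x) v"
    proof (intro allI impI)
      fix m assume "m < n"
      then have "nf i (x # take m t) \<noteq> W" using h(4) by (metis Suc_mono take_Suc_Cons)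
      then show "nf (fst x) (take m t) \<noteq> nf (fst x) v" using key valid_take h(2) by blast
    qed
    then show "t \<in> Hs N (fst x) (nf (fst x) v) n" unfolding Hs_def using h key by auto
  next
    fix t assume "t \<in> Hs N (fst x) (nf (fst x) v) n"
    then have h: "length t = n" "valid_path N (fst x) t" "nf (fst x) t = nf (fst x) v"
      "\<forall>m<n. nf (fst x) (take m t) \<noteq> nf (fst x) v"
      unfolding Hs_def by auto
    have "\<forall>m<Suc n. nf i (take m (x#t)) \<noteq> W"
      unfolding All_less_Suc2
    proof (intro conjI allI impI)
      show "nf i (take 0 (x # t)) \<noteq> W" using W by simp
      fix m assume "m < n"
      then show "nf i (take (Suc m) (x # t)) \<noteq> W" using h key valid_take by auto
    qed
    then show "t \<in> {t. x#t \<in> Hs N i W (Suc n)}" unfolding Hs_def using h key vstep by auto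
  qed
qed

lemma Hs_direct:
  assumes "valid_path N i [x]"
  shows "{t. x#t \<in> Hs N i [x] (Suc n)} = (if n = 0 then {[]} else {})"
proof (cases n)
  case 0
  then show ?thesis using assms by (auto simp: Hs_def)
next
  case (Suc n')
  have "nf i (take 1 (x#t)) = [x]" for t by simp
  then show ?thesis using Suc by (auto simp: Hs_def)
qed


lemma Hs_split_sum:
  assumes vx: "valid_path N b (x#v)" and W2: "nf b (x#v) = x#y#rest"
  shows "sum (path_prob p b) (Hs N b (x#y#rest) n) =
    (\<Sum>a\<le>n. sum (path_prob p b) (Hs N b [x] a) * sum (path_prob p (fst x)) (Hs N (fst x) (nf (fst x) v) (n-a)))"
proof -
  define c where "c = fst x"
  define W' where "W' = nf c v"
  define W where "W = x#y#rest"
  have vs: "valid_path N b (x#u) \<longleftrightarrow> valid_path N c u" for u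
    using vx by (simp add: valid_Cons c_def)
  have F: "nf b (t1@u) = W \<longleftrightarrow> nf c u = W'"
    if "valid_path N b t1" "nf b t1 = [x]" "valid_path N c u" for t1 u
  proof -
    have "nf b (t1@u) = nf b (x#u)" using nf_append_cong[of b t1 "[x]" u] that by simp
    then show ?thesis using nf_cons_cancel[of N b x u v] vs vx that W2 unfolding W_def W'_def c_def by simp
  qed
  have lvt: "last_vertex b t1 = c" if "valid_path N b t1" "nf b t1 = [x]" for t1
    using nf_inv[OF that(1)] that(2) c_def by simp
  define A where "A t = (LEAST a. nf b (take a t) = [x])" for t
  have mem: "(t \<in> Hs N b W n \<and> A t = a) \<longleftrightarrow> (a \<le> n \<and> take a t \<in> Hs N b [x] a \<and> drop a t \<in> Hs N c W' (n-a))"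
    if len: "length t = n" for t a
  proof
    assume "t \<in> Hs N b W n \<and> A t = a"
    then have h: "valid_path N b t" "nf b t = W" "\<forall>m<n. nf b (take m t) \<noteq> W" and a: "A t = a"
      unfolding Hs_def by auto
    obtain m where m: "m \<le> length t" "nf b (take m t) = [x]" using cut_lemma h(2) W_def by blast
    have Pa: "nf b (take a t) = [x]" unfolding a[symmetric] A_def by (rule LeastI[of _ m]) (rule m(2))
    have an: "a \<le> n" using Least_le[of "\<lambda>a. nf b (take a t) = [x]" m] m len unfolding a[symmetric] A_def by simp
    have nPa: "\<forall>m<a. nf b (take m t) \<noteq> [x]" using not_less_Least[of _ "\<lambda>a. nf b (take a t) = [x]"] unfolding a[symmetric] A_def by blast
    have t1: "take a t \<in> Hs N b [x] a"
      unfolding Hs_def using an len Pa nPa valid_take[OF h(1)] by (auto simp: min_def)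
    have vt1: "valid_path N b (take a t)" using valid_take[OF h(1)] .
    have vt2: "valid_path N c (drop a t)"
      using h(1) lvt[OF vt1 Pa] valid_append[of N b "take a t" "drop a t"] by simp
    have "nf c (drop a t) = W'" using F[OF vt1 Pa vt2] h(2) by simp
    moreover have "\<forall>m<n-a. nf c (take m (drop a t)) \<noteq> W'"
    proof (intro allI impI notI)
      fix m assume m: "m < n - a" "nf c (take m (drop a t)) = W'"
      have "nf b (take a t @ take m (drop a t)) = W" using F[OF vt1 Pa valid_take[OF vt2]] m by simp
      moreover have "take a t @ take m (drop a t) = take (a+m) t" by (simp add: take_add)
      ultimately show False using h(3) m an by auto
    qed
    ultimately have "drop a t \<in> Hs N c W' (n-a)" unfolding Hs_def using vt2 len by auto
    then show "a \<le> n \<and> take a t \<in> Hs N b [x] a \<and> drop a t \<in> Hs N c W' (n-a)" using an t1 by blast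
  next
    assume "a \<le> n \<and> take a t \<in> Hs N b [x] a \<and> drop a t \<in> Hs N c W' (n-a)"
    then have an: "a \<le> n" and h1: "valid_path N b (take a t)" "nf b (take a t) = [x]" "\<forall>m<a. nf b (take m t) \<noteq> [x]"
      and h2: "valid_path N c (drop a t)" "nf c (drop a t) = W'" "\<forall>m<n-a. nf c (take m (drop a t)) \<noteq> W'"
      unfolding Hs_def by (auto simp: min_def)
    have vt: "valid_path N b t"
      using valid_append[of N b "take a t" "drop a t"] lvt[OF h1(1,2)] h1 h2 by simp
    have nt: "nf b t = W" using F[OF h1(1,2) h2(1)] h2(2) by simp
    have pre: "\<forall>m<n. nf b (take m t) \<noteq> W"
    proof (intro allI impI notI)
      fix m assume m: "m < n" "nf b (take m t) = W"
      show False
      proof (cases "m \<le> a")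
        case True
        obtain m'' where m'': "m'' \<le> length (take m t)" "nf b (take m'' (take m t)) = [x]"
          using cut_lemma m(2) W_def by blast
        have "m'' \<le> m" using m'' by simp
        then have e: "nf b (take m'' t) = [x]" using m'' by (simp add: min_def)
        show False
        proof (cases "m'' < a")
          case True then show False using h1(3) e by blast
        next
          case False
          then have "m = a" "m'' = a" using \<open>m'' \<le> m\<close> \<open>m \<le> a\<close> by auto
          then show False using m(2) h1(2) W_def by simp
        qed
      next
        case False
        then obtain m' where m': "m = a + m'" by (metis le_add_diff_inverse nat_le_linear)
        have "take m t = take a t @ take m' (drop a t)" by (simp add: m' take_add)
        then have "nf c (take m' (drop a t)) = W'" using F[OF h1(1,2) valid_take[OF h2(1)]] m(2) by simp
        then show False using h2(3) m m' by auto
      qed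
    qed
    have "A t = a" unfolding A_def
    proof (rule Least_equality)
      show "nf b (take a t) = [x]" by (rule h1(2))
      fix m assume "nf b (take m t) = [x]"
      then show "a \<le> m" using h1(3) by (meson not_le)
    qed
    then show "t \<in> Hs N b W n \<and> A t = a" unfolding Hs_def using len vt nt pre by auto
  qed
  have "sum (path_prob p b) (Hs N b W n) = (\<Sum>a\<le>n. sum (path_prob p b) {t. t \<in> Hs N b W n \<and> A t = a})"
  proof -
    have "A t \<le> n" if "t \<in> Hs N b W n" for t
    proof -
      have "length t = n" using that by (simp add: Hs_def)
      then show ?thesis using mem[of t "A t"] that by blast
    qed
    then have "A ` Hs N b W n \<subseteq> {..n}" by auto
    then show ?thesis using sum.group[OF Hs_finite finite_atMost, where g = A and h = "path_prob p b"] by simp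
  qed
  also have "\<dots> = (\<Sum>a\<le>n. sum (path_prob p b) (Hs N b [x] a) * sum (path_prob p c) (Hs N c W' (n-a)))"
  proof (rule sum.cong[OF refl])
    fix a assume "a \<in> {..n}"
    then have an: "a \<le> n" by simp
    have img: "{t. t \<in> Hs N b W n \<and> A t = a} = (\<lambda>(t1,t2). t1@t2) ` (Hs N b [x] a \<times> Hs N c W' (n-a))"
    proof (intro set_eqI iffI)
      fix t assume "t \<in> {t. t \<in> Hs N b W n \<and> A t = a}"
      then have l: "length t = n" by (simp add: Hs_def)
      then have "a \<le> n \<and> take a t \<in> Hs N b [x] a \<and> drop a t \<in> Hs N c W' (n-a)"
        using mem[of t a] \<open>t \<in> {t. t \<in> Hs N b W n \<and> A t = a}\<close> by blast
      then show "t \<in> (\<lambda>(t1,t2). t1@t2) ` (Hs N b [x] a \<times> Hs N c W' (n-a))"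
        by (metis (no_types, lifting) SigmaI append_take_drop_id case_prod_conv image_eqI)
    next
      fix t assume "t \<in> (\<lambda>(t1,t2). t1@t2) ` (Hs N b [x] a \<times> Hs N c W' (n-a))"
      then obtain t1 t2 where t: "t = t1@t2" "t1 \<in> Hs N b [x] a" "t2 \<in> Hs N c W' (n-a)" by auto
      then have l: "length t1 = a" "length t2 = n - a" unfolding Hs_def by auto
      then have "length t = n" "take a t = t1" "drop a t = t2" using t(1) an by auto
      then show "t \<in> {t. t \<in> Hs N b W n \<and> A t = a}" using mem[of t a] t an by simp
    qed
    have inj: "inj_on (\<lambda>(t1,t2). t1@t2) (Hs N b [x] a \<times> Hs N c W' (n-a))"
    proof (rule inj_onI)
      fix u u' assume u: "u \<in> Hs N b [x] a \<times> Hs N c W' (n-a)" and u': "u' \<in> Hs N b [x] a \<times> Hs N c W' (n-a)"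
        and e: "(\<lambda>(t1,t2). t1@t2) u = (\<lambda>(t1,t2). t1@t2) u'"
      obtain t1 t2 t1' t2' where uu: "u = (t1,t2)" "u' = (t1',t2')" by fastforce
      have "length t1 = a" "length t1' = a" using u u' uu by (simp_all add: Hs_def)
      then show "u = u'" using e uu by (simp add: append_eq_append_conv)
    qed
    have pp: "path_prob p b (t1@t2) = path_prob p b t1 * path_prob p c t2" if "t1 \<in> Hs N b [x] a" for t1 t2
    proof -
      have "valid_path N b t1" "nf b t1 = [x]" using that by (simp_all add: Hs_def)
      then show ?thesis using lvt by (simp add: pp_append)
    qed
    have "sum (path_prob p b) {t. t \<in> Hs N b W n \<and> A t = a} =
        (\<Sum>(t1,t2)\<in>Hs N b [x] a \<times> Hs N c W' (n-a). path_prob p b (t1@t2))"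
      unfolding img by (subst sum.reindex[OF inj]) (simp add: case_prod_beta)
    also have "\<dots> = (\<Sum>(t1,t2)\<in>Hs N b [x] a \<times> Hs N c W' (n-a). path_prob p b t1 * path_prob p c t2)"
      by (rule sum.cong[OF refl]) (auto simp: pp)
    also have "\<dots> = sum (path_prob p b) (Hs N b [x] a) * sum (path_prob p c) (Hs N c W' (n-a))"
      by (simp add: sum_product sum.cartesian_product)
    finally show "sum (path_prob p b) {t. t \<in> Hs N b W n \<and> A t = a} =
        sum (path_prob p b) (Hs N b [x] a) * sum (path_prob p c) (Hs N c W' (n-a))" .
  qed
  finally show ?thesis unfolding W_def W'_def c_def .
qed


lemma hit_Hs:
  assumes "i \<in> {1..N}" "j \<in> {1..N}" "i \<noteq> j" "k \<in> {-1,1}"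
  shows "hit_prob p N i j k n = sum (path_prob p i) (Hs N i [(j,k)] n)"
proof -
  have vj: "valid_path N i [(j,k)]" using assms by (simp add: valid_Cons)
  have key: "valid_path N i s \<Longrightarrow> same_arrow N i s [(j,k)] \<longleftrightarrow> nf i s = [(j,k)]" for s
    using sa_iff_nf[OF _ vj] by simp
  have "{s. length s = n \<and> valid_path N i s \<and> same_arrow N i s [(j, k)] \<and>
               (\<forall>m < n. \<not> same_arrow N i (take m s) [(j, k)])} = Hs N i [(j,k)] n"
    unfolding Hs_def using key valid_take by blast
  then show ?thesis unfolding hit_prob_def by simp
qed

definition HH :: "(nat \<Rightarrow> nat \<Rightarrow> int \<Rightarrow> real) \<Rightarrow> nat \<Rightarrow> nat \<Rightarrow> nat \<Rightarrow> int \<Rightarrow> nat \<Rightarrow> real" where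
  "HH p N i j k n = sum (path_prob p i) (Hs N i [(j,k)] n)"

lemma hit_rec:
  assumes i: "i \<in> {1..N}" and j: "j \<in> {1..N}" and ij: "i \<noteq> j" and k: "k \<in> {-1,1}"
  shows "HH p N i j k (Suc n) = (if n = 0 then p i j k else 0)
     + (\<Sum>m\<in>{1..N}-{i,j}. p i m k * HH p N m j k n)
     + (\<Sum>m\<in>{1..N}-{i}. p i m (-k) * (\<Sum>a\<le>n. HH p N m i (-k) a * HH p N i j k (n-a)))"
proof -
  define S where "S = Hs N i [(j,k)] (Suc n)"
  define A where "A = ({1..N}-{i}) \<times> ({-1,1}::int set)"
  define g where "g b k' = p i b k' * sum (path_prob p b) {t. (b,k')#t \<in> S}" for b k'
  have kk: "k \<noteq> -k" using k by auto
  have hdA: "\<forall>s\<in>S. s \<noteq> [] \<and> hd s \<in> A"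
  proof
    fix s assume "s \<in> S"
    then have "length s = Suc n" "valid_path N i s" unfolding S_def Hs_def by auto
    then obtain y s' where "s = y#s'" "valid_path N i (y#s')" by (cases s) auto
    then show "s \<noteq> [] \<and> hd s \<in> A" unfolding A_def by (auto simp: valid_Cons mem_Times_iff)
  qed
  have "HH p N i j k (Suc n) = sum (path_prob p i) S" unfolding HH_def S_def ..
  also have "\<dots> = (\<Sum>x\<in>A. sum (\<lambda>t. path_prob p i (x#t)) {t. x#t \<in> S})"
    by (rule sum_first[OF _ _ hdA]) (simp_all add: S_def Hs_finite A_def)
  also have "\<dots> = (\<Sum>x\<in>A. g (fst x) (snd x))"
    unfolding g_def by (simp add: sum_distrib_left)
  also have "\<dots> = (\<Sum>b\<in>{1..N}-{i}. \<Sum>k'\<in>{-1,1}. g b k')"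
  proof -
    have e: "(\<lambda>x. g (fst x) (snd x)) = case_prod g" by (simp add: fun_eq_iff)
    show ?thesis unfolding A_def e by (rule sum.cartesian_product[symmetric])
  qed
  also have "\<dots> = (\<Sum>b\<in>{1..N}-{i}. g b k + g b (-k))"
  proof (rule sum.cong[OF refl])
    fix b
    have "{-1,1::int} = {k,-k}" using k by auto
    then show "(\<Sum>k'\<in>{-1,1}. g b k') = g b k + g b (-k)" using kk by simp
  qed
  also have "\<dots> = (\<Sum>b\<in>{1..N}-{i}. g b k) + (\<Sum>b\<in>{1..N}-{i}. g b (-k))"
    by (simp add: sum.distrib)
  also have "(\<Sum>b\<in>{1..N}-{i}. g b k) = g j k + (\<Sum>b\<in>{1..N}-{i,j}. g b k)"
  proof -
    have "j \<in> {1..N}-{i}" using j ij by auto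
    then have "(\<Sum>b\<in>{1..N}-{i}. g b k) = g j k + (\<Sum>b\<in>{1..N}-{i}-{j}. g b k)"
      by (simp add: sum.remove)
    moreover have "{1..N}-{i}-{j} = {1..N}-{i,j}" by auto
    ultimately show ?thesis by simp
  qed
  also have "g j k = (if n = 0 then p i j k else 0)"
  proof -
    have "valid_path N i [(j,k)]" using i j ij k by (simp add: valid_Cons)
    then have "{t. (j,k)#t \<in> S} = (if n = 0 then {[]} else {})"
      unfolding S_def by (rule Hs_direct)
    then show ?thesis unfolding g_def by simp
  qed
  also have "(\<Sum>b\<in>{1..N}-{i,j}. g b k) = (\<Sum>m\<in>{1..N}-{i,j}. p i m k * HH p N m j k n)"
  proof (rule sum.cong[OF refl])
    fix b assume b: "b \<in> {1..N}-{i,j}"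
    have v: "valid_path N i ((b,k)#[(j,k)])" using b i j k ij by (auto simp: valid_Cons)
    have nv: "nf i ((b,k)#[(j,k)]) = [(j,k)]" using ij by (simp add: nf_two)
    have "{t. (b,k)#t \<in> S} = Hs N b (nf b [(j,k)]) n"
      unfolding S_def using Hs_first[OF v nv] by simp
    then show "g b k = p i b k * HH p N b j k n" unfolding g_def HH_def by simp
  qed
  also have "(\<Sum>b\<in>{1..N}-{i}. g b (-k)) = (\<Sum>m\<in>{1..N}-{i}. p i m (-k) * (\<Sum>a\<le>n. HH p N m i (-k) a * HH p N i j k (n-a)))"
  proof (rule sum.cong[OF refl])
    fix b assume b: "b \<in> {1..N}-{i}"
    have v: "valid_path N i ((b,-k)#[(i,-k),(j,k)])" using b i j k ij by (auto simp: valid_Cons)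
    have nv: "nf i ((b,-k)#[(i,-k),(j,k)]) = [(j,k)]" using ij kk by (simp add: nf_def nstep_def)
    have n2: "nf b [(i,-k),(j,k)] = [(i,-k),(j,k)]" using kk by (simp add: nf_two)
    have "{t. (b,-k)#t \<in> S} = Hs N b [(i,-k),(j,k)] n"
      unfolding S_def using Hs_first[OF v nv] n2 by simp
    moreover have v2: "valid_path N b ((i,-k)#[(j,k)])" using b i j k ij by (auto simp: valid_Cons)
    have "sum (path_prob p b) (Hs N b [(i,-k),(j,k)] n) =
       (\<Sum>a\<le>n. sum (path_prob p b) (Hs N b [(i,-k)] a) * sum (path_prob p i) (Hs N i (nf i [(j,k)]) (n-a)))"
      using Hs_split_sum[OF v2, of "(j,k)" "[]" p n] n2 by simp
    ultimately show "g b (-k) = p i b (-k) * (\<Sum>a\<le>n. HH p N b i (-k) a * HH p N i j k (n-a))"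
      unfolding g_def HH_def by simp
  qed
  finally show ?thesis by simp
qed


lemma pp_nonneg:
  assumes pos: "\<And>a b k'. a \<in> {1..N} \<Longrightarrow> b \<in> {1..N} \<Longrightarrow> a \<noteq> b \<Longrightarrow> k' \<in> {-1, 1} \<Longrightarrow> 0 < p a b k'"
  shows "valid_path N i s \<Longrightarrow> 0 \<le> path_prob p i s"
proof (induction s arbitrary: i)
  case Nil
  then show ?case by simp
next
  case (Cons y s)
  then have "0 < p i (fst y) (snd y)" "0 \<le> path_prob p (fst y) s" using pos by (auto simp: valid_Cons)
  then show ?case by simp
qed

lemma HH_nonneg:
  assumes pos: "\<And>a b k'. a \<in> {1..N} \<Longrightarrow> b \<in> {1..N} \<Longrightarrow> a \<noteq> b \<Longrightarrow> k' \<in> {-1, 1} \<Longrightarrow> 0 < p a b k'"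
  shows "0 \<le> HH p N i j k n"
  unfolding HH_def by (rule sum_nonneg) (use pp_nonneg[OF pos] in \<open>auto simp: Hs_def\<close>)

lemma HH_0: "HH p N i j k 0 = 0"
proof -
  have "Hs N i [(j,k)] 0 = {}" by (auto simp: Hs_def)
  then show ?thesis by (simp add: HH_def)
qed

lemma cauchy_le:
  fixes X Y :: "nat \<Rightarrow> real"
  assumes "\<And>n. 0 \<le> X n" "\<And>n. 0 \<le> Y n"
  shows "(\<Sum>n<M. \<Sum>a\<le>n. X a * Y (n-a)) \<le> (\<Sum>a<M. X a) * (\<Sum>b<M. Y b)"
proof -
  have "(\<Sum>n<M. \<Sum>a\<le>n. X a * Y (n-a)) = (\<Sum>(a,b)\<in>{(a,b). a+b<M}. X a * Y b)"
    by (rule sum.triangle_reindex[symmetric])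
  also have "\<dots> \<le> (\<Sum>(a,b)\<in>{..<M}\<times>{..<M}. X a * Y b)"
    by (rule sum_mono2) (auto intro: mult_nonneg_nonneg assms)
  also have "\<dots> = (\<Sum>a<M. X a) * (\<Sum>b<M. Y b)"
    by (simp add: sum_product sum.cartesian_product)
  finally show ?thesis .
qed

lemma HH_partial:
  assumes pos: "\<And>a b k'. a \<in> {1..N} \<Longrightarrow> b \<in> {1..N} \<Longrightarrow> a \<noteq> b \<Longrightarrow> k' \<in> {-1, 1} \<Longrightarrow> 0 < p a b k'"
    and psum: "\<And>a. a \<in> {1..N} \<Longrightarrow> (\<Sum>b \<in> {1..N} - {a}. \<Sum>k' \<in> {-1, 1}. p a b k') = 1"
  shows "\<forall>i j k. i \<in> {1..N} \<longrightarrow> j \<in> {1..N} \<longrightarrow> i \<noteq> j \<longrightarrow> k \<in> {-1,1} \<longrightarrow> (\<Sum>n<M. HH p N i j k n) \<le> 1"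
proof (induction M)
  case 0
  then show ?case by simp
next
  case (Suc M)
  show ?case
  proof (intro allI impI)
    fix i j k assume i: "i \<in> {1..N}" and j: "j \<in> {1..N}" and ij: "i \<noteq> j" and k: "k \<in> {-1::int,1}"
    have mk: "-k \<in> {-1,1}" using k by auto
    have kk: "k \<noteq> -k" using k by auto
    have nn: "0 \<le> HH p N a b c n" for a b c n by (rule HH_nonneg[OF pos])
    have pnn: "b \<in> {1..N} \<Longrightarrow> b \<noteq> i \<Longrightarrow> c \<in> {-1,1} \<Longrightarrow> 0 \<le> p i b c" for b c
      using pos[OF i] by (metis less_imp_le)
    have "(\<Sum>n<Suc M. HH p N i j k n) = (\<Sum>n<M. HH p N i j k (Suc n))"
      by (simp only: sum.lessThan_Suc_shift HH_0)
    also have "\<dots> = (\<Sum>n<M. (if n = 0 then p i j k else 0))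
        + (\<Sum>n<M. \<Sum>m\<in>{1..N}-{i,j}. p i m k * HH p N m j k n)
        + (\<Sum>n<M. \<Sum>m\<in>{1..N}-{i}. p i m (-k) * (\<Sum>a\<le>n. HH p N m i (-k) a * HH p N i j k (n-a)))"
      by (simp add: hit_rec[OF i j ij k] sum.distrib)
    also have "\<dots> \<le> p i j k + (\<Sum>m\<in>{1..N}-{i,j}. p i m k) + (\<Sum>m\<in>{1..N}-{i}. p i m (-k))"
    proof (intro add_mono)
      show "(\<Sum>n<M. (if n = 0 then p i j k else 0)) \<le> p i j k"
        using pnn[OF j ij[symmetric] k] by (cases M) (simp_all add: sum.lessThan_Suc_shift)
      have "(\<Sum>n<M. \<Sum>m\<in>{1..N}-{i,j}. p i m k * HH p N m j k n) = (\<Sum>m\<in>{1..N}-{i,j}. p i m k * (\<Sum>n<M. HH p N m j k n))"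
        by (subst sum.swap) (simp add: sum_distrib_left)
      also have "\<dots> \<le> (\<Sum>m\<in>{1..N}-{i,j}. p i m k * 1)"
      proof (rule sum_mono)
        fix m assume m: "m \<in> {1..N}-{i,j}"
        show "p i m k * (\<Sum>n<M. HH p N m j k n) \<le> p i m k * 1"
          using Suc.IH m j k pnn[of m k] by (intro mult_left_mono) auto
      qed
      finally show "(\<Sum>n<M. \<Sum>m\<in>{1..N}-{i,j}. p i m k * HH p N m j k n) \<le> (\<Sum>m\<in>{1..N}-{i,j}. p i m k)" by simp
      have "(\<Sum>n<M. \<Sum>m\<in>{1..N}-{i}. p i m (-k) * (\<Sum>a\<le>n. HH p N m i (-k) a * HH p N i j k (n-a)))
          = (\<Sum>m\<in>{1..N}-{i}. p i m (-k) * (\<Sum>n<M. \<Sum>a\<le>n. HH p N m i (-k) a * HH p N i j k (n-a)))"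
        by (subst sum.swap) (simp add: sum_distrib_left)
      also have "\<dots> \<le> (\<Sum>m\<in>{1..N}-{i}. p i m (-k) * 1)"
      proof (rule sum_mono)
        fix m assume m: "m \<in> {1..N}-{i}"
        have "(\<Sum>n<M. \<Sum>a\<le>n. HH p N m i (-k) a * HH p N i j k (n-a)) \<le> (\<Sum>a<M. HH p N m i (-k) a) * (\<Sum>b<M. HH p N i j k b)"
          by (rule cauchy_le) (rule nn)+
        also have "\<dots> \<le> 1 * 1"
          using Suc.IH m i j ij k mk by (intro mult_mono) (auto intro: sum_nonneg nn)
        finally show "p i m (-k) * (\<Sum>n<M. \<Sum>a\<le>n. HH p N m i (-k) a * HH p N i j k (n-a)) \<le> p i m (-k) * 1"
          using pnn[of m "-k"] m mk by (intro mult_left_mono) auto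
      qed
      finally show "(\<Sum>n<M. \<Sum>m\<in>{1..N}-{i}. p i m (-k) * (\<Sum>a\<le>n. HH p N m i (-k) a * HH p N i j k (n-a))) \<le> (\<Sum>m\<in>{1..N}-{i}. p i m (-k))" by simp
    qed
    also have "\<dots> = 1"
    proof -
      have "(\<Sum>m\<in>{1..N}-{i}. p i m k) = p i j k + (\<Sum>m\<in>{1..N}-{i,j}. p i m k)"
      proof -
        have "j \<in> {1..N}-{i}" using j ij by auto
        then have "(\<Sum>m\<in>{1..N}-{i}. p i m k) = p i j k + (\<Sum>m\<in>{1..N}-{i}-{j}. p i m k)"
          by (simp add: sum.remove)
        moreover have "{1..N}-{i}-{j} = {1..N}-{i,j}" by auto
        ultimately show ?thesis by simp
      qed
      moreover have "(\<Sum>b \<in> {1..N} - {i}. \<Sum>k' \<in> {-1, 1}. p i b k') = (\<Sum>m\<in>{1..N}-{i}. p i m k) + (\<Sum>m\<in>{1..N}-{i}. p i m (-k))"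
      proof -
        have "{-1,1::int} = {k,-k}" using k by auto
        then show ?thesis using kk by (simp add: sum.distrib)
      qed
      ultimately show ?thesis using psum[OF i] by simp
    qed
    finally show "(\<Sum>n<Suc M. HH p N i j k n) \<le> 1" .
  qed
qed

lemma HH_sums:
  assumes pos: "\<And>a b k'. a \<in> {1..N} \<Longrightarrow> b \<in> {1..N} \<Longrightarrow> a \<noteq> b \<Longrightarrow> k' \<in> {-1, 1} \<Longrightarrow> 0 < p a b k'"
    and psum: "\<And>a. a \<in> {1..N} \<Longrightarrow> (\<Sum>b \<in> {1..N} - {a}. \<Sum>k' \<in> {-1, 1}. p a b k') = 1"
    and x: "x \<in> {0..1}"
    and c: "i \<in> {1..N}" "j \<in> {1..N}" "i \<noteq> j" "k \<in> {-1,1}"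
  shows "(\<lambda>n. HH p N i j k n * x ^ n) sums R p N i j k x"
    and "summable (\<lambda>n. norm (HH p N i j k n * x ^ n))"
proof -
  have nn: "0 \<le> HH p N a b c n" for a b c n by (rule HH_nonneg[OF pos])
  have s1: "summable (HH p N i j k)"
    using HH_partial[OF pos psum] c by (intro summableI_nonneg_bounded[where x=1]) (auto intro: nn)
  have le: "norm (HH p N i j k n * x ^ n) \<le> HH p N i j k n" for n
  proof -
    have "0 \<le> x ^ n" "x ^ n \<le> 1" using x by (auto intro: power_le_one)
    then show ?thesis using nn[of i j k n] by (simp add: abs_mult mult_left_le)
  qed
  show s2: "summable (\<lambda>n. norm (HH p N i j k n * x ^ n))"
    by (rule summable_comparison_test[OF _ s1]) (use le in auto)
  have "R p N i j k x = (\<Sum>n. HH p N i j k n * x ^ n)"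
    unfolding R_def using hit_Hs[OF c] by (simp add: HH_def)
  then show "(\<lambda>n. HH p N i j k n * x ^ n) sums R p N i j k x"
    using summable_norm_cancel[OF s2] by (simp add: summable_sums)
qed


theorem proposition5p3:
  fixes N :: nat and p :: "nat \<Rightarrow> nat \<Rightarrow> int \<Rightarrow> real"
  assumes N3: "N \<ge> 3"
    and p_pos: "\<And>a b k'. a \<in> {1..N} \<Longrightarrow> b \<in> {1..N} \<Longrightarrow> a \<noteq> b \<Longrightarrow> k' \<in> {-1, 1} \<Longrightarrow>
                 0 < p a b k' \<and> p a b k' < 1"
    and p_sum: "\<And>a. a \<in> {1..N} \<Longrightarrow> (\<Sum>b \<in> {1..N} - {a}. \<Sum>k' \<in> {-1, 1}. p a b k') = 1"
    and lam: "x \<in> {0..1}"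
    and ij: "i \<in> {1..N}" "j \<in> {1..N}" "i \<noteq> j"
    and k: "k \<in> {-1, 1}"
  shows "R p N i j k x =
    x * (p i j k
         + (\<Sum>m \<in> {1..N} - {i, j}. p i m k * R p N m j k x)
         + (\<Sum>m \<in> {1..N} - {i}. p i m (-k) * R p N m i (-k) x * R p N i j k x))"
proof -
  have pos: "\<And>a b k'. a \<in> {1..N} \<Longrightarrow> b \<in> {1..N} \<Longrightarrow> a \<noteq> b \<Longrightarrow> k' \<in> {-1, 1} \<Longrightarrow> 0 < p a b k'"
    using p_pos by blast
  have mk: "-k \<in> {-1,1}" using k by auto
  have S1: "(\<lambda>n. HH p N a b c n * x ^ n) sums R p N a b c x" and S2: "summable (\<lambda>n. norm (HH p N a b c n * x ^ n))"
    if "a \<in> {1..N}" "b \<in> {1..N}" "a \<noteq> b" "c \<in> {-1,1}" for a b c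
    using HH_sums[OF pos p_sum lam that] by blast+
  define H where "H = HH p N"
  define S0 where "S0 = p i j k + (\<Sum>m \<in> {1..N} - {i, j}. p i m k * R p N m j k x)
         + (\<Sum>m \<in> {1..N} - {i}. p i m (-k) * (R p N m i (-k) x * R p N i j k x))"
  have e: "H i j k (Suc n) * x ^ n = (if n = 0 then p i j k else 0)
     + (\<Sum>m\<in>{1..N}-{i,j}. p i m k * (H m j k n * x ^ n))
     + (\<Sum>m\<in>{1..N}-{i}. p i m (-k) * (\<Sum>a\<le>n. (H m i (-k) a * x ^ a) * (H i j k (n-a) * x ^ (n-a))))" for n
  proof -
    have pw: "(\<Sum>a\<le>n. H m i (-k) a * H i j k (n-a)) * x ^ n = (\<Sum>a\<le>n. (H m i (-k) a * x ^ a) * (H i j k (n-a) * x ^ (n-a)))" for m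
    proof -
      have xa: "x ^ n = x ^ a * x ^ (n - a)" if "a \<le> n" for a
        using that by (simp add: power_add[symmetric])
      have "(\<Sum>a\<le>n. H m i (-k) a * H i j k (n-a)) * x ^ n = (\<Sum>a\<le>n. H m i (-k) a * H i j k (n-a) * x ^ n)"
        by (rule sum_distrib_right)
      also have "\<dots> = (\<Sum>a\<le>n. (H m i (-k) a * x ^ a) * (H i j k (n-a) * x ^ (n-a)))"
        by (rule sum.cong[OF refl]) (simp add: xa mult_ac)
      finally show ?thesis .
    qed
    have "H i j k (Suc n) * x ^ n = (if n = 0 then p i j k else 0) * x ^ n
       + (\<Sum>m\<in>{1..N}-{i,j}. p i m k * H m j k n) * x ^ n
       + (\<Sum>m\<in>{1..N}-{i}. p i m (-k) * (\<Sum>a\<le>n. H m i (-k) a * H i j k (n-a))) * x ^ n"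
      unfolding H_def hit_rec[OF ij k] by (simp only: distrib_right)
    also have "(if n = 0 then p i j k else 0) * x ^ n = (if n = 0 then p i j k else 0)" by simp
    also have "(\<Sum>m\<in>{1..N}-{i,j}. p i m k * H m j k n) * x ^ n = (\<Sum>m\<in>{1..N}-{i,j}. p i m k * (H m j k n * x ^ n))"
      by (simp add: sum_distrib_right mult.assoc)
    also have "(\<Sum>m\<in>{1..N}-{i}. p i m (-k) * (\<Sum>a\<le>n. H m i (-k) a * H i j k (n-a))) * x ^ n
       = (\<Sum>m\<in>{1..N}-{i}. p i m (-k) * (\<Sum>a\<le>n. (H m i (-k) a * x ^ a) * (H i j k (n-a) * x ^ (n-a))))"
      by (subst sum_distrib_right) (rule sum.cong[OF refl], simp only: mult.assoc pw)
    finally show ?thesis .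
  qed
  have sums0: "(\<lambda>n. H i j k (Suc n) * x ^ n) sums S0"
    unfolding e S0_def
  proof (intro sums_add sums_sum sums_mult)
    show "(\<lambda>n. if n = 0 then p i j k else 0) sums p i j k"
      using sums_single[of 0 "\<lambda>_. p i j k"] by simp
  next
    fix m assume m: "m \<in> {1..N}-{i,j}"
    show "(\<lambda>n. H m j k n * x ^ n) sums R p N m j k x"
      unfolding H_def using S1[of m j k] m ij k by auto
  next
    fix m assume m: "m \<in> {1..N}-{i}"
    have c1: "m \<in> {1..N}" "i \<in> {1..N}" "m \<noteq> i" using m ij by auto
    have "(\<lambda>n. \<Sum>a\<le>n. (H m i (-k) a * x ^ a) * (H i j k (n-a) * x ^ (n-a))) sums
       ((\<Sum>n. H m i (-k) n * x ^ n) * (\<Sum>n. H i j k n * x ^ n))"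
      unfolding H_def
      by (rule Cauchy_product_sums) (use S2[OF c1 mk] S2[OF ij k] in auto)
    moreover have "(\<Sum>n. H m i (-k) n * x ^ n) = R p N m i (-k) x"
      unfolding H_def using S1[OF c1 mk] by (simp add: sums_iff)
    moreover have "(\<Sum>n. H i j k n * x ^ n) = R p N i j k x"
      unfolding H_def using S1[OF ij k] by (simp add: sums_iff)
    ultimately show "(\<lambda>n. \<Sum>a\<le>n. (H m i (-k) a * x ^ a) * (H i j k (n-a) * x ^ (n-a))) sums
       (R p N m i (-k) x * R p N i j k x)" by simp
  qed
  have "(\<lambda>n. H i j k (Suc n) * x ^ Suc n) sums (x * S0)"
    using sums_mult[OF sums0, of x] by (simp add: mult_ac)
  then have "(\<lambda>n. H i j k n * x ^ n) sums (x * S0 + H i j k 0 * x ^ 0)"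
    using sums_Suc_iff[of "\<lambda>n. H i j k n * x ^ n" "x * S0"] by simp
  then have "(\<lambda>n. H i j k n * x ^ n) sums (x * S0)"
    by (simp add: H_def HH_0)
  moreover have "(\<lambda>n. H i j k n * x ^ n) sums R p N i j k x" unfolding H_def by (rule S1[OF ij k])
  ultimately have "R p N i j k x = x * S0" using sums_unique2 by blast
  then show ?thesis unfolding S0_def by (simp add: mult_ac)
qed

end
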